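(* Let $S\in(0,1)$ and let $f_S,f_C,h_S,h_C>0$ satisfy the dominance assumption $f_S>h_C$ and $f_C>h_S$. Put $r_S=f_S/h_S$ and $r_C=f_C/h_C$. For the planar system \[ SB' = f_S\,SB\,(S-SB) - h_S\,CR\cdot SB,\qquad CR' = f_C\,CR\,(1-S-CR) - h_C\,SB\cdot CR, \] the following hold: (i) the equilibrium $(SB,CR)=(0,0)$ (i.e. $SR=S$, $CB=1-S$) is never stable; (ii) the Blue-victory equilibrium $(SB,CR)=(S,0)$ (i.e. $SR=CR=0$, $CB=1-S$) is stable if and only if $r_C<\frac{S}{1-S}$; (iii) the Red-victory equilibrium $(SB,CR)=(0,1-S)$ (i.e. $SB=CB=0$, $SR=S$) is stable if and only if $r_S<\frac{1-S}{S}$; (iv) the stalemate equilibrium $(SB_b,CR_b)$ is stable if and only if $\frac{1}{1+r_S}<S<\frac{r_C}{1+r_C}$, equivalently $r_C>\frac{S}{1-S}$ and $r_S>\frac{1-S}{S}$, where \[ CB_b=\frac{S(1+r_S)-1}{r_Sr_C-1},\quad SR_b=\frac{r_C-S(1+r_C)}{r_Sr_C-1},\quad SB_b=r_C\,CB_b,\quad CR_b=r_S\,SR_b . \] Moreover, the conditions in (ii) and (iii) cannot hold simultaneously.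
   Context: Basic armed-revolt model. A population of total size $1$ is split into supporters of Blue, a fixed fraction $S\in(0,1)$, and contrarians (supporters of Red), a fraction $1-S$. The variables $SB,SR,CR,CB\ge 0$ are the fractions of the total population that are, respectively, supporters controlled by Blue, supporters controlled by Red, contrarians controlled by Red, contrarians controlled by Blue, with $SB+SR=S$ and $CR+CB=1-S$. This reduces the model to the planar system in $(SB,CR)$ given in the claim. An equilibrium is called stable when all eigenvalues of the Jacobian of the planar system's right-hand side, evaluated at that equilibrium, have negative real part. Under the dominance assumption $r_Sr_C>1$, so the denominators in the stalemate formulas are positive. *)

theory Defs
  imports "HOL-Analysis.Analysis"
begin

definition SB_rhs :: "real \<Rightarrow> real \<Rightarrow> real \<Rightarrow> real \<Rightarrow> real \<Rightarrow> real" where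
  "SB_rhs fS hS S sb cr = fS * sb * (S - sb) - hS * cr * sb"

definition CR_rhs :: "real \<Rightarrow> real \<Rightarrow> real \<Rightarrow> real \<Rightarrow> real \<Rightarrow> real" where
  "CR_rhs fC hC S sb cr = fC * cr * (1 - S - cr) - hC * sb * cr"

definition jac :: "real \<Rightarrow> real \<Rightarrow> real \<Rightarrow> real \<Rightarrow> real \<Rightarrow> real \<Rightarrow> real \<Rightarrow> real^2^2" where
  "jac fS fC hS hC S sb cr =
     (\<chi> i j. if i = 1 then
                (if j = 1 then deriv (\<lambda>x. SB_rhs fS hS S x cr) sb
                          else deriv (\<lambda>y. SB_rhs fS hS S sb y) cr)
              else
                (if j = 1 then deriv (\<lambda>x. CR_rhs fC hC S x cr) sb
                          else deriv (\<lambda>y. CR_rhs fC hC S sb y) cr))"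

definition stable_matrix :: "real^'n^'n \<Rightarrow> bool" where
  "stable_matrix J \<longleftrightarrow>
     (\<forall>\<mu>::complex. det (\<chi> i j. complex_of_real (J $ i $ j) - (if i = j then \<mu> else 0)) = 0
        \<longrightarrow> Re \<mu> < 0)"

definition stable_eq :: "real \<Rightarrow> real \<Rightarrow> real \<Rightarrow> real \<Rightarrow> real \<Rightarrow> real \<Rightarrow> real \<Rightarrow> bool" where
  "stable_eq fS fC hS hC S sb cr \<longleftrightarrow> stable_matrix (jac fS fC hS hC S sb cr)"

end

theory Submission imports Defs begin

lemma quad_stable:
  fixes a b c d :: real
  shows "(\<forall>\<mu>::complex. (of_real a - \<mu>) * (of_real d - \<mu>) - of_real b * of_real c = 0 \<longrightarrow> Re \<mu> < 0)
     \<longleftrightarrow> (a + d < 0 \<and> a*d - b*c > 0)" (is "?L \<longleftrightarrow> ?R")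
proof
  assume R: ?R
  show ?L
  proof (intro allI impI)
    fix \<mu> :: complex
    assume e: "(of_real a - \<mu>) * (of_real d - \<mu>) - of_real b * of_real c = 0"
    obtain x y where mu: "\<mu> = Complex x y" by (cases \<mu>)
    from e have re: "a*d - b*c - (a+d)*x + x*x - y*y = 0" and im: "y * (2*x - (a+d)) = 0"
      by (auto simp: mu complex_eq_iff algebra_simps)
    show "Re \<mu> < 0"
    proof (cases "y = 0")
      case True
      show ?thesis
      proof (rule ccontr)
        assume "\<not> Re \<mu> < 0"
        hence "x \<ge> 0" by (simp add: mu)
        hence "0 \<le> (-(a+d))*x" using R by (intro mult_nonneg_nonneg) auto
        moreover have "0 \<le> x*x" by simp
        moreover have "a*d - b*c + (-(a+d))*x + x*x = 0" using re True by (simp add: algebra_simps)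
        ultimately show False using R by linarith
      qed
    next
      case False
      hence "x = (a+d)/2" using im by simp
      thus ?thesis using R mu by simp
    qed
  qed
next
  assume L: ?L
  show ?R
  proof (rule ccontr)
    assume nR: "\<not> ?R"
    show False
    proof (cases "a*d - b*c \<le> 0")
      case True
      define t where "t = a + d"
      define w where "w = sqrt (t*t - 4*(a*d-b*c))"
      have tt: "0 \<le> t*t" by simp
      have nn: "0 \<le> t*t - 4*(a*d-b*c)" using True tt by (smt (verit))
      have w0: "w \<ge> 0" and ww: "w*w = t*t - 4*(a*d-b*c)" using nn by (auto simp: w_def)
      have "\<bar>t\<bar> \<le> w" unfolding w_def using True
        by (intro real_le_rsqrt) (simp add: power2_eq_square)
      hence x0: "(t + w)/2 \<ge> 0" by simp
      define x where "x = (t+w)/2"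
      have "x*x - t*x + (a*d-b*c) = 0" unfolding x_def using ww by (simp add: field_simps)
      hence "(of_real a - of_real x) * (of_real d - of_real x) - of_real b * of_real c = (0::complex)"
        unfolding t_def by (simp only: of_real_mult[symmetric] of_real_diff[symmetric] of_real_eq_0_iff) (simp add: algebra_simps)
      with L have "Re (of_real x) < 0" by blast
      thus False using x0 x_def by simp
    next
      case False
      hence t0: "a + d \<ge> 0" using nR by simp
      define z :: complex where "z = of_real ((a+d)*(a+d) - 4*(a*d-b*c))"
      define \<mu> where "\<mu> = (of_real (a+d) + csqrt z)/2"
      have "(of_real a - \<mu>) * (of_real d - \<mu>) - of_real b * of_real c = 0"
      proof -
        have "csqrt z * csqrt z = z" by (metis power2_csqrt power2_eq_square)
        thus ?thesis unfolding \<mu>_def z_def by (simp add: field_simps)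
      qed
      with L have "Re \<mu> < 0" by blast
      moreover have "Re (csqrt z) \<ge> 0" by (rule Re_csqrt)
      moreover have "Re \<mu> = ((a+d) + Re (csqrt z))/2" unfolding \<mu>_def by simp
      ultimately show False using t0 by argo
    qed
  qed
qed


lemma jac_eq:
  "jac fS fC hS hC S sb cr =
    (\<chi> i j. if i = 1 then (if j = 1 then fS*(S - 2* sb) - hS* cr else - hS* sb)
             else (if j = 1 then - hC* cr else fC*(1 - S - 2* cr) - hC* sb))"
proof -
  have d1: "deriv (\<lambda>x. SB_rhs fS hS S x cr) sb = fS*(S - 2* sb) - hS* cr"
    unfolding SB_rhs_def by (intro DERIV_imp_deriv) (auto intro!: derivative_eq_intros simp: algebra_simps)
  have d2: "deriv (\<lambda>y. SB_rhs fS hS S sb y) cr = - hS* sb"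
    unfolding SB_rhs_def by (intro DERIV_imp_deriv) (auto intro!: derivative_eq_intros simp: algebra_simps)
  have d3: "deriv (\<lambda>x. CR_rhs fC hC S x cr) sb = - hC* cr"
    unfolding CR_rhs_def by (intro DERIV_imp_deriv) (auto intro!: derivative_eq_intros simp: algebra_simps)
  have d4: "deriv (\<lambda>y. CR_rhs fC hC S sb y) cr = fC*(1 - S - 2* cr) - hC* sb"
    unfolding CR_rhs_def by (intro DERIV_imp_deriv) (auto intro!: derivative_eq_intros simp: algebra_simps)
  show ?thesis unfolding jac_def d1 d2 d3 d4 ..
qed

lemma stable_eq_iff:
  "stable_eq fS fC hS hC S sb cr \<longleftrightarrow>
    (let a = fS*(S - 2* sb) - hS* cr; b = - hS* sb; c = - hC* cr; d = fC*(1 - S - 2* cr) - hC* sb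
     in a + d < 0 \<and> a*d - b*c > 0)"
proof -
  have ne: "(2::2) \<noteq> 1" by simp
  show ?thesis
    unfolding stable_eq_def stable_matrix_def jac_eq det_2 Let_def
    using quad_stable[of "fS*(S - 2* sb) - hS* cr" "fC*(1 - S - 2* cr) - hC* sb" "- hS* sb" "- hC* cr"]
    by (simp add: ne mult.commute)
qed

lemma negtri:
  fixes a d :: real
  assumes "a < 0"
  shows "(a + d < 0 \<and> 0 < a * d - 0) \<longleftrightarrow> d < 0"
  using assms by (auto simp: zero_less_mult_iff)

theorem theorem1:
  fixes S fS fC hS hC :: real
  assumes "0 < S" "S < 1"
    and "0 < fS" "0 < fC" "0 < hS" "0 < hC"
    and "fS > hC" "fC > hS"
  defines "rS \<equiv> fS / hS" and "rC \<equiv> fC / hC"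
  defines "CBb \<equiv> (S * (1 + rS) - 1) / (rS * rC - 1)"
    and "SRb \<equiv> (rC - S * (1 + rC)) / (rS * rC - 1)"
  defines "SBb \<equiv> rC * CBb" and "CRb \<equiv> rS * SRb"
  shows "(\<not> stable_eq fS fC hS hC S 0 0)
    \<and> (stable_eq fS fC hS hC S S 0 \<longleftrightarrow> rC < S / (1 - S))
    \<and> (stable_eq fS fC hS hC S 0 (1 - S) \<longleftrightarrow> rS < (1 - S) / S)
    \<and> (stable_eq fS fC hS hC S SBb CRb \<longleftrightarrow> 1 / (1 + rS) < S \<and> S < rC / (1 + rC))
    \<and> ((1 / (1 + rS) < S \<and> S < rC / (1 + rC)) \<longleftrightarrow> (rC > S / (1 - S) \<and> rS > (1 - S) / S))
    \<and> (\<not> (rC < S / (1 - S) \<and> rS < (1 - S) / S))"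
proof -
  have rS0: "rS > 0" and rC0: "rC > 0" using assms(3-6) by (simp_all add: rS_def rC_def)
  have ff0: "hC*hS < fS*fC" using assms(3-8) by (intro mult_strict_mono) auto
  hence ff: "fS*fC > hS*hC" by (simp add: mult.commute)
  have D: "rS*rC > 1" using ff assms(5,6) by (simp add: rS_def rC_def field_simps)
  have p1: "\<not> stable_eq fS fC hS hC S 0 0"
  proof -
    have "fS*S > 0" "fC*(1-S) > 0" using assms(1-4) by simp_all
    thus ?thesis by (simp add: stable_eq_iff Let_def)
  qed
  have e2: "rC < S / (1 - S) \<longleftrightarrow> fC*(1-S) < hC*S"
    using assms(1,2,6) by (simp add: rC_def field_simps)
  have p2: "stable_eq fS fC hS hC S S 0 \<longleftrightarrow> rC < S / (1 - S)"
  proof -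
    have "stable_eq fS fC hS hC S S 0 \<longleftrightarrow> (-(fS*S)) + (fC*(1-S) - hC*S) < 0 \<and> 0 < (-(fS*S)) * (fC*(1-S) - hC*S) - 0"
      by (simp add: stable_eq_iff Let_def algebra_simps)
    also have "\<dots> \<longleftrightarrow> fC*(1-S) - hC*S < 0"
      by (rule negtri) (use assms(1,3) in simp)
    finally show ?thesis unfolding e2 by simp
  qed
  have e3: "rS < (1 - S) / S \<longleftrightarrow> fS*S < hS*(1-S)"
    using assms(1,2,5) by (simp add: rS_def field_simps)
  have p3: "stable_eq fS fC hS hC S 0 (1 - S) \<longleftrightarrow> rS < (1 - S) / S"
  proof -
    have "stable_eq fS fC hS hC S 0 (1 - S) \<longleftrightarrow> (-(fC*(1-S))) + (fS*S - hS*(1-S)) < 0 \<and> 0 < (-(fC*(1-S))) * (fS*S - hS*(1-S)) - 0"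
      by (simp add: stable_eq_iff Let_def algebra_simps)
    also have "\<dots> \<longleftrightarrow> fS*S - hS*(1-S) < 0"
      by (rule negtri) (use assms(2,4) in simp)
    finally show ?thesis unfolding e3 by simp
  qed
  have Dne: "rS*rC - 1 \<noteq> 0" using D by simp
  have q1: "S - SBb = SRb" unfolding SBb_def CBb_def SRb_def using Dne
    by (simp add: field_simps)
  have q2: "1 - S - CRb = CBb" unfolding CRb_def CBb_def SRb_def using Dne
    by (simp add: field_simps)
  have q3: "hS*CRb = fS*SRb" using assms(5) by (simp add: CRb_def rS_def)
  have q4: "hC*SBb = fC*CBb" using assms(6) by (simp add: SBb_def rC_def)
  have a: "fS*(S - 2*SBb) - hS*CRb = - fS*SBb" using q1 q3 by (simp add: algebra_simps)
  have d: "fC*(1 - S - 2*CRb) - hC*SBb = - fC*CRb"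
  proof -
    have "fC*(1 - S - 2*CRb) - hC*SBb = fC*(1 - S - CRb) - fC*CRb - hC*SBb" by (simp add: algebra_simps)
    also have "\<dots> = - fC*CRb" using q2 q4 by simp
    finally show ?thesis .
  qed
  have det: "(- fS*SBb)*(- fC*CRb) - (- hS*SBb)*(- hC*CRb) = SBb*CRb*(fS*fC - hS*hC)"
    by (simp add: algebra_simps)
  have st: "stable_eq fS fC hS hC S SBb CRb \<longleftrightarrow> SBb > 0 \<and> CRb > 0"
  proof -
    have "stable_eq fS fC hS hC S SBb CRb \<longleftrightarrow> (- fS*SBb) + (- fC*CRb) < 0 \<and> SBb*CRb*(fS*fC - hS*hC) > 0"
      unfolding stable_eq_iff Let_def a d det ..
    also have "\<dots> \<longleftrightarrow> SBb > 0 \<and> CRb > 0"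
    proof -
      have "SBb*CRb*(fS*fC - hS*hC) > 0 \<longleftrightarrow> SBb*CRb > 0" using ff
        by (simp add: zero_less_mult_iff)
      moreover have "SBb*CRb > 0 \<longleftrightarrow> (SBb > 0 \<and> CRb > 0) \<or> (SBb < 0 \<and> CRb < 0)"
        by (simp add: zero_less_mult_iff)
      moreover have "SBb < 0 \<and> CRb < 0 \<Longrightarrow> (- fS*SBb) + (- fC*CRb) > 0"
      proof -
        assume h: "SBb < 0 \<and> CRb < 0"
        have "fS*SBb < 0" "fC*CRb < 0" using h assms(3,4) by (simp_all add: mult_pos_neg)
        thus ?thesis by simp
      qed
      moreover have "SBb > 0 \<and> CRb > 0 \<Longrightarrow> (- fS*SBb) + (- fC*CRb) < 0"
      proof -
        assume h: "SBb > 0 \<and> CRb > 0"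
        have "fS*SBb > 0" "fC*CRb > 0" using h assms(3,4) by simp_all
        thus ?thesis by simp
      qed
      ultimately show ?thesis by linarith
    qed
    finally show ?thesis .
  qed
  have Dp: "rS*rC - 1 > 0" using D by simp
  have s1: "SBb > 0 \<longleftrightarrow> 1 / (1 + rS) < S"
  proof -
    have "SBb > 0 \<longleftrightarrow> CBb > 0" using rC0 by (simp add: SBb_def zero_less_mult_iff)
    also have "\<dots> \<longleftrightarrow> S*(1+rS) - 1 > 0" using Dp by (simp add: CBb_def zero_less_divide_iff)
    also have "\<dots> \<longleftrightarrow> 1 / (1 + rS) < S" using rS0 by (simp add: field_simps)
    finally show ?thesis .
  qed
  have s2: "CRb > 0 \<longleftrightarrow> S < rC / (1 + rC)"
  proof -
    have "CRb > 0 \<longleftrightarrow> SRb > 0" using rS0 by (simp add: CRb_def zero_less_mult_iff)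
    also have "\<dots> \<longleftrightarrow> rC - S*(1+rC) > 0" using Dp by (simp add: SRb_def zero_less_divide_iff)
    also have "\<dots> \<longleftrightarrow> S < rC / (1 + rC)" using rC0 by (simp add: field_simps)
    finally show ?thesis .
  qed
  have p5: "(1 / (1 + rS) < S \<and> S < rC / (1 + rC)) \<longleftrightarrow> (rC > S / (1 - S) \<and> rS > (1 - S) / S)"
    using rS0 rC0 assms(1,2) by (simp add: field_simps) (auto simp: algebra_simps)
  have p6: "\<not> (rC < S / (1 - S) \<and> rS < (1 - S) / S)"
  proof
    assume h: "rC < S / (1 - S) \<and> rS < (1 - S) / S"
    hence "rC * rS < (S / (1 - S)) * ((1 - S) / S)" using rS0 rC0
      by (intro mult_strict_mono) auto
    also have "\<dots> = 1" using assms(1,2) by simp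
    finally show False using D by (simp add: mult.commute)
  qed
  show ?thesis using p1 p2 p3 st s1 s2 p5 p6 by blast
qed

end
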